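(* Let $\beta\ge0$. If a symmetric restaking network $G$ admits a $\beta$-costly attack, then it admits a $\beta$-costly attack that is consolidated.
   Context: A restaking network is a tuple $G=(V,S,\sigma,w,\theta,\pi)$ with finite nonempty validator set $V$, finite service set $S$, stake $\sigma:V\to\mathbb{R}_{>0}$, allocation $w:V\times S\to\mathbb{R}_{\ge0}$ with $w(v,s)\le\sigma(v)$, thresholds $\theta:S\to[0,1]$, prizes $\pi:S\to\mathbb{R}_{>0}$. An attack is $\alpha:V\times S\to\mathbb{R}_{\ge0}$ with $\alpha(v,s)\le w(v,s)$; attacked services $S_\alpha=\{s:\sum_v\alpha(v,s)\ge\theta(s)\sum_v w(v,s)\}$; validator cost $c_v(\alpha)=\min(\sigma(v),\sum_{s\in S_\alpha}\alpha(v,s))$; total cost $C(\alpha)=\sum_vc_v(\alpha)$; prize $\Pi(\alpha)=\sum_{s\in S_\alpha}\pi(s)$. $\beta$-costly: $S_\alpha\ne\emptyset$ and $C(\alpha)\le\Pi(\alpha)+\beta$. $G$ is symmetric if all validators have the same stake $\sigma$, for each $s$ all validators have the same allocation $w(s)$, and all services have the same threshold $\theta$. Let $m=|V|$ and $V=\{v_1,\dots,v_m\}$ (any ordering). An attack is consolidated if for every $s\in S_\alpha$ and $i\in\{1,\dots,m\}$: $\alpha(v_i,s)=w(s)$ if $i\le\lfloor\theta m\rfloor$; $\alpha(v_i,s)=(\theta m-\lfloor\theta m\rfloor)w(s)$ if $i=\lfloor\theta m\rfloor+1$; $\alpha(v_i,s)=0$ otherwise. *)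

theory Defs
  imports Complex_Main
begin

definition restaking_network ::
  "'v set \<Rightarrow> 's set \<Rightarrow> ('v \<Rightarrow> real) \<Rightarrow> ('v \<Rightarrow> 's \<Rightarrow> real) \<Rightarrow> ('s \<Rightarrow> real) \<Rightarrow> ('s \<Rightarrow> real) \<Rightarrow> bool" where
  "restaking_network V S \<sigma> w \<theta> \<pi> \<longleftrightarrow>
     finite V \<and> V \<noteq> {} \<and> finite S \<and>
     (\<forall>v\<in>V. \<sigma> v > 0) \<and>
     (\<forall>v\<in>V. \<forall>s\<in>S. 0 \<le> w v s \<and> w v s \<le> \<sigma> v) \<and>
     (\<forall>s\<in>S. 0 \<le> \<theta> s \<and> \<theta> s \<le> 1) \<and>
     (\<forall>s\<in>S. \<pi> s > 0)"

definition is_attack ::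
  "'v set \<Rightarrow> 's set \<Rightarrow> ('v \<Rightarrow> 's \<Rightarrow> real) \<Rightarrow> ('v \<Rightarrow> 's \<Rightarrow> real) \<Rightarrow> bool" where
  "is_attack V S w \<alpha> \<longleftrightarrow> (\<forall>v\<in>V. \<forall>s\<in>S. 0 \<le> \<alpha> v s \<and> \<alpha> v s \<le> w v s)"

definition attacked ::
  "'v set \<Rightarrow> 's set \<Rightarrow> ('v \<Rightarrow> 's \<Rightarrow> real) \<Rightarrow> ('s \<Rightarrow> real) \<Rightarrow> ('v \<Rightarrow> 's \<Rightarrow> real) \<Rightarrow> 's set" where
  "attacked V S w \<theta> \<alpha> = {s\<in>S. (\<Sum>v\<in>V. \<alpha> v s) \<ge> \<theta> s * (\<Sum>v\<in>V. w v s)}"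

definition validator_cost ::
  "'v set \<Rightarrow> 's set \<Rightarrow> ('v \<Rightarrow> real) \<Rightarrow> ('v \<Rightarrow> 's \<Rightarrow> real) \<Rightarrow> ('s \<Rightarrow> real) \<Rightarrow> ('v \<Rightarrow> 's \<Rightarrow> real) \<Rightarrow> 'v \<Rightarrow> real" where
  "validator_cost V S \<sigma> w \<theta> \<alpha> v = min (\<sigma> v) (\<Sum>s\<in>attacked V S w \<theta> \<alpha>. \<alpha> v s)"

definition total_cost ::
  "'v set \<Rightarrow> 's set \<Rightarrow> ('v \<Rightarrow> real) \<Rightarrow> ('v \<Rightarrow> 's \<Rightarrow> real) \<Rightarrow> ('s \<Rightarrow> real) \<Rightarrow> ('v \<Rightarrow> 's \<Rightarrow> real) \<Rightarrow> real" where
  "total_cost V S \<sigma> w \<theta> \<alpha> = (\<Sum>v\<in>V. validator_cost V S \<sigma> w \<theta> \<alpha> v)"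

definition prize ::
  "'v set \<Rightarrow> 's set \<Rightarrow> ('v \<Rightarrow> 's \<Rightarrow> real) \<Rightarrow> ('s \<Rightarrow> real) \<Rightarrow> ('s \<Rightarrow> real) \<Rightarrow> ('v \<Rightarrow> 's \<Rightarrow> real) \<Rightarrow> real" where
  "prize V S w \<theta> \<pi> \<alpha> = (\<Sum>s\<in>attacked V S w \<theta> \<alpha>. \<pi> s)"

definition beta_costly ::
  "real \<Rightarrow> 'v set \<Rightarrow> 's set \<Rightarrow> ('v \<Rightarrow> real) \<Rightarrow> ('v \<Rightarrow> 's \<Rightarrow> real) \<Rightarrow> ('s \<Rightarrow> real) \<Rightarrow> ('s \<Rightarrow> real) \<Rightarrow> ('v \<Rightarrow> 's \<Rightarrow> real) \<Rightarrow> bool" where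
  "beta_costly \<beta> V S \<sigma> w \<theta> \<pi> \<alpha> \<longleftrightarrow>
     is_attack V S w \<alpha> \<and> attacked V S w \<theta> \<alpha> \<noteq> {} \<and>
     total_cost V S \<sigma> w \<theta> \<alpha> \<le> prize V S w \<theta> \<pi> \<alpha> + \<beta>"

definition symmetric_network ::
  "'v set \<Rightarrow> 's set \<Rightarrow> ('v \<Rightarrow> real) \<Rightarrow> ('v \<Rightarrow> 's \<Rightarrow> real) \<Rightarrow> ('s \<Rightarrow> real) \<Rightarrow> bool" where
  "symmetric_network V S \<sigma> w \<theta> \<longleftrightarrow>
     (\<forall>u\<in>V. \<forall>v\<in>V. \<sigma> u = \<sigma> v) \<and>
     (\<forall>s\<in>S. \<forall>u\<in>V. \<forall>v\<in>V. w u s = w v s) \<and>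
     (\<forall>s\<in>S. \<forall>t\<in>S. \<theta> s = \<theta> t)"

text \<open>Consolidated attack w.r.t. an enumeration e of V as e 1, ..., e m (m = card V).
  In a symmetric network w (e i) s is the common allocation w(s) and \<theta> s the common threshold.\<close>
definition consolidated ::
  "'v set \<Rightarrow> 's set \<Rightarrow> ('v \<Rightarrow> 's \<Rightarrow> real) \<Rightarrow> ('s \<Rightarrow> real) \<Rightarrow> (nat \<Rightarrow> 'v) \<Rightarrow> ('v \<Rightarrow> 's \<Rightarrow> real) \<Rightarrow> bool" where
  "consolidated V S w \<theta> e \<alpha> \<longleftrightarrow>
     (\<forall>s\<in>attacked V S w \<theta> \<alpha>. \<forall>i\<in>{1..card V}.
        \<alpha> (e i) s =
          (let t = \<theta> s * real (card V); k = nat \<lfloor>t\<rfloor> in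
           if i \<le> k then w (e i) s
           else if i = k + 1 then (t - of_int \<lfloor>t\<rfloor>) * w (e i) s
           else 0))"

end

theory Submission imports Defs begin

lemma sumg:
  "(\<Sum>i=1..m. (if i \<le> k then A else if i = k+1 then B else (0::real)))
     = real (min m k) * A + (if k+1 \<le> m then B else 0)"
proof (induction m)
  case 0 then show ?case by simp
next
  case (Suc m)
  have "(\<Sum>i=1..Suc m. (if i \<le> k then A else if i = k+1 then B else (0::real)))
     = (\<Sum>i=1..m. (if i \<le> k then A else if i = k+1 then B else (0::real)))
       + (if Suc m \<le> k then A else if Suc m = k+1 then B else 0)"
    by simp
  also have "\<dots> = real (min (Suc m) k) * A + (if k+1 \<le> Suc m then B else 0)"
    unfolding Suc.IH by (cases "Suc m \<le> k"; cases "Suc m = k+1") (auto simp: algebra_simps min_def)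
  finally show ?case .
qed

lemma key:
  fixes x :: "'v \<Rightarrow> real"
  assumes fin: "finite V" and xb: "\<forall>v\<in>V. 0 \<le> x v \<and> x v \<le> W" and c: "c > 0"
    and W: "W \<ge> 0" and f: "0 \<le> f" "f \<le> 1"
    and tot: "(real k + f) * W \<le> (\<Sum>v\<in>V. x v)"
  shows "real k * min c W + min c (f*W) \<le> (\<Sum>v\<in>V. min c (x v))"
proof -
  define c' where "c' = min c W"
  define P where "P = {v\<in>V. x v \<ge> c'}"
  have PV: "P \<subseteq> V" and finP: "finite P" using fin by (auto simp: P_def)
  define p where "p = card P"
  have split: "(\<Sum>v\<in>V. min c (x v)) = (\<Sum>v\<in>V-P. min c (x v)) + (\<Sum>v\<in>P. min c (x v))"
    using sum.subset_diff[OF PV fin] by simp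
  have s1: "(\<Sum>v\<in>P. min c (x v)) \<ge> real p * c'"
  proof -
    have "(\<Sum>v\<in>P. min c (x v)) \<ge> (\<Sum>v\<in>P. c')"
      by (rule sum_mono) (auto simp: P_def c'_def)
    then show ?thesis by (simp add: p_def)
  qed
  have s2: "(\<Sum>v\<in>V-P. min c (x v)) = (\<Sum>v\<in>V-P. x v)"
    by (rule sum.cong) (auto simp: P_def c'_def)
  have s3: "(\<Sum>v\<in>V. x v) = (\<Sum>v\<in>V-P. x v) + (\<Sum>v\<in>P. x v)"
    using sum.subset_diff[OF PV fin] by simp
  have s4: "(\<Sum>v\<in>P. x v) \<le> real p * W"
  proof -
    have "(\<Sum>v\<in>P. x v) \<le> (\<Sum>v\<in>P. W)" by (rule sum_mono) (use xb PV in auto)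
    then show ?thesis by (simp add: p_def)
  qed
  have s5: "(\<Sum>v\<in>V-P. x v) \<ge> 0" by (rule sum_nonneg) (use xb in auto)
  have c'W: "c' \<le> W" "c' \<ge> 0" "c' \<le> c" using c W by (auto simp: c'_def)
  have fW: "f * W \<le> W" using f W by (simp add: mult_left_le_one_le)
  have mfw: "min c (f*W) \<le> c'" "min c (f*W) \<le> f * W"
    using fW by (auto simp: c'_def min_def)
  show ?thesis
  proof (cases "p \<ge> k+1")
    case True
    then have "real p \<ge> real k + 1" by simp
    then have "real p * c' \<ge> (real k + 1) * c'" using c'W by (intro mult_right_mono) auto
    then show ?thesis using split s1 s2 s5 mfw unfolding c'_def[symmetric] by (simp add: algebra_simps)
  next
    case False
    then have kp: "real k - real p \<ge> 0" by simp
    have "(real k - real p) * c' \<le> (real k - real p) * W" using kp c'W by (intro mult_left_mono) auto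
    then show ?thesis using split s1 s2 s3 s4 tot mfw unfolding c'_def[symmetric]
      by (simp add: algebra_simps)
  qed
qed


theorem mainTheorem15:
  fixes V :: "'v set" and S :: "'s set" and \<sigma> :: "'v \<Rightarrow> real"
    and w :: "'v \<Rightarrow> 's \<Rightarrow> real" and \<theta> :: "'s \<Rightarrow> real" and \<pi> :: "'s \<Rightarrow> real"
    and \<beta> :: real and e :: "nat \<Rightarrow> 'v"
  assumes "restaking_network V S \<sigma> w \<theta> \<pi>"
    and "symmetric_network V S \<sigma> w \<theta>"
    and "\<beta> \<ge> 0"
    and "bij_betw e {1..card V} V"
    and "\<exists>\<alpha>. beta_costly \<beta> V S \<sigma> w \<theta> \<pi> \<alpha>"
  shows "\<exists>\<alpha>. beta_costly \<beta> V S \<sigma> w \<theta> \<pi> \<alpha> \<and> consolidated V S w \<theta> e \<alpha>"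
proof -
  note rn = assms(1)[unfolded restaking_network_def]
  note sy = assms(2)[unfolded symmetric_network_def]
  note bij = assms(4)
  have finV: "finite V" and Vne: "V \<noteq> {}" and finS: "finite S"
    and \<sigma>pos: "\<forall>v\<in>V. \<sigma> v > 0" and wb: "\<forall>v\<in>V. \<forall>s\<in>S. 0 \<le> w v s \<and> w v s \<le> \<sigma> v"
    and \<theta>b: "\<forall>s\<in>S. 0 \<le> \<theta> s \<and> \<theta> s \<le> 1" and \<pi>pos: "\<forall>s\<in>S. \<pi> s > 0"
    using rn by auto
  obtain \<alpha> where bc: "beta_costly \<beta> V S \<sigma> w \<theta> \<pi> \<alpha>" using assms(5) by blast
  define T where "T = attacked V S w \<theta> \<alpha>"
  have att: "is_attack V S w \<alpha>" and Tne: "T \<noteq> {}"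
    and costa: "total_cost V S \<sigma> w \<theta> \<alpha> \<le> prize V S w \<theta> \<pi> \<alpha> + \<beta>"
    using bc by (auto simp: beta_costly_def T_def)
  have TS: "T \<subseteq> S" by (auto simp: T_def attacked_def)
  have Tatt: "\<forall>s\<in>T. (\<Sum>v\<in>V. \<alpha> v s) \<ge> \<theta> s * (\<Sum>v\<in>V. w v s)" by (auto simp: T_def attacked_def)
  define m where "m = card V"
  have m1: "m \<ge> 1" using finV Vne by (simp add: m_def Suc_le_eq card_gt_0_iff)
  have eV: "\<And>i. i \<in> {1..m} \<Longrightarrow> e i \<in> V" using bij by (auto simp: m_def bij_betw_def)
  define idx where "idx v = inv_into {1..m} e v" for v
  have idx_e: "\<And>i. i \<in> {1..m} \<Longrightarrow> idx (e i) = i"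
    using bij by (auto simp: idx_def m_def bij_betw_def)
  have reidx: "\<And>h. (\<Sum>v\<in>V. h v) = (\<Sum>i=1..m. h (e i))"
    using sum.reindex_bij_betw[OF bij, symmetric] by (simp add: m_def)
  define v0 where "v0 = e 1"
  have v0V: "v0 \<in> V" using eV m1 by (simp add: v0_def)
  obtain s0 where s0: "s0 \<in> T" using Tne by blast
  define \<theta>0 where "\<theta>0 = \<theta> s0"
  define \<sigma>0 where "\<sigma>0 = \<sigma> v0"
  define ws where "ws s = w v0 s" for s
  have sy1: "\<forall>u\<in>V. \<forall>v\<in>V. \<sigma> u = \<sigma> v" and sy2: "\<forall>s\<in>S. \<forall>u\<in>V. \<forall>v\<in>V. w u s = w v s"
    and sy3: "\<forall>s\<in>S. \<forall>t\<in>S. \<theta> s = \<theta> t" using sy by blast+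
  have \<theta>c: "\<forall>s\<in>S. \<theta> s = \<theta>0" unfolding \<theta>0_def using sy3 s0 TS by blast
  have \<sigma>c: "\<forall>v\<in>V. \<sigma> v = \<sigma>0" unfolding \<sigma>0_def using sy1 v0V by blast
  have wc: "\<forall>v\<in>V. \<forall>s\<in>S. w v s = ws s" unfolding ws_def using sy2 v0V by blast
  have \<sigma>0pos: "\<sigma>0 > 0" using \<sigma>pos v0V by (simp add: \<sigma>0_def)
  have ws0: "\<forall>s\<in>S. ws s \<ge> 0" using wb v0V by (simp add: ws_def)
  have \<theta>0b: "0 \<le> \<theta>0" "\<theta>0 \<le> 1" using \<theta>b s0 TS by (auto simp: \<theta>0_def)
  define t where "t = \<theta>0 * real m"
  define k where "k = nat \<lfloor>t\<rfloor>"
  define f where "f = t - of_int \<lfloor>t\<rfloor>"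
  have t0: "t \<ge> 0" using \<theta>0b by (simp add: t_def)
  have tm: "t \<le> real m" using \<theta>0b by (simp add: t_def mult_left_le_one_le)
  have rk: "real k = of_int \<lfloor>t\<rfloor>" using t0 by (simp add: k_def)
  have f01: "0 \<le> f" "f < 1" unfolding f_def using floor_correct[of t] by linarith+
  have kf: "real k + f = t" using rk by (simp add: f_def)
  have km: "k \<le> m" using rk tm f01 kf by linarith
  have kmf: "k = m \<Longrightarrow> f = 0" using kf tm f01 by simp
  have sumw: "\<forall>s\<in>S. (\<Sum>v\<in>V. w v s) = real m * ws s"
    using wc by (simp add: m_def)
  define E where "E = {s\<in>S. \<theta> s * (\<Sum>v\<in>V. w v s) \<le> 0}"
  define A0 where "A0 = T \<union> E"
  have A0S: "A0 \<subseteq> S" using TS by (auto simp: A0_def E_def)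
  have finA0: "finite A0" using A0S finS finite_subset by blast
  define g where "g i = (if i \<le> k then (1::real) else if i = k+1 then f else 0)" for i
  have g01: "\<And>i. 0 \<le> g i \<and> g i \<le> 1" using f01 by (simp add: g_def)
  define \<alpha>' where "\<alpha>' v s = (if s \<in> A0 then g (idx v) * w v s else 0)" for v s
  have sumg1: "(\<Sum>i=1..m. g i * c) = t * c" for c :: real
  proof -
    have "(\<Sum>i=1..m. g i * c) = (\<Sum>i=1..m. (if i \<le> k then c else if i = k+1 then f*c else 0))"
      by (rule sum.cong) (auto simp: g_def)
    also have "\<dots> = real k * c + (if k+1 \<le> m then f*c else 0)"
      using sumg[where m=m and k=k and A=c and B="f*c"] km by (simp add: min_def)
    also have "\<dots> = t * c" using kf kmf km by (cases "k+1 \<le> m") (auto simp: algebra_simps)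
    finally show ?thesis .
  qed
  have sumA: "\<forall>s\<in>A0. (\<Sum>v\<in>V. \<alpha>' v s) = \<theta> s * (\<Sum>v\<in>V. w v s)"
  proof
    fix s assume s: "s \<in> A0"
    then have sS: "s \<in> S" using A0S by blast
    have "(\<Sum>v\<in>V. \<alpha>' v s) = (\<Sum>i=1..m. g i * ws s)"
      unfolding reidx by (rule sum.cong) (use s sS eV idx_e wc in \<open>auto simp: \<alpha>'_def\<close>)
    also have "\<dots> = t * ws s" by (rule sumg1)
    also have "\<dots> = \<theta> s * (\<Sum>v\<in>V. w v s)" using sumw sS \<theta>c by (simp add: t_def)
    finally show "(\<Sum>v\<in>V. \<alpha>' v s) = \<theta> s * (\<Sum>v\<in>V. w v s)" .
  qed
  have attA: "attacked V S w \<theta> \<alpha>' = A0"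
  proof (intro set_eqI iffI)
    fix s assume "s \<in> attacked V S w \<theta> \<alpha>'"
    then have sS: "s \<in> S" and ge: "(\<Sum>v\<in>V. \<alpha>' v s) \<ge> \<theta> s * (\<Sum>v\<in>V. w v s)"
      by (auto simp: attacked_def)
    show "s \<in> A0"
    proof (rule ccontr)
      assume "s \<notin> A0"
      then have "(\<Sum>v\<in>V. \<alpha>' v s) = 0" by (simp add: \<alpha>'_def)
      moreover have "s \<notin> E" using \<open>s \<notin> A0\<close> by (simp add: A0_def)
      ultimately show False using ge sS by (auto simp: E_def)
    qed
  next
    fix s assume "s \<in> A0" then show "s \<in> attacked V S w \<theta> \<alpha>'"
      using sumA A0S by (auto simp: attacked_def)
  qed
  have isatt: "is_attack V S w \<alpha>'"
    unfolding is_attack_def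
  proof (intro ballI)
    fix v s assume "v \<in> V" "s \<in> S"
    then have "0 \<le> w v s" using wb by auto
    then show "0 \<le> \<alpha>' v s \<and> \<alpha>' v s \<le> w v s"
      using g01[of "idx v"] by (auto simp: \<alpha>'_def intro: mult_left_le_one_le)
  qed
  have cons: "consolidated V S w \<theta> e \<alpha>'"
    unfolding consolidated_def attA
  proof (intro ballI)
    fix s i assume s: "s \<in> A0" and i: "i \<in> {1..card V}"
    then have "\<theta> s = \<theta>0" using A0S \<theta>c by auto
    then show "\<alpha>' (e i) s = (let t = \<theta> s * real (card V); k = nat \<lfloor>t\<rfloor> in
           if i \<le> k then w (e i) s
           else if i = k + 1 then (t - of_int \<lfloor>t\<rfloor>) * w (e i) s
           else 0)"
      using s i idx_e by (simp add: \<alpha>'_def g_def Let_def t_def k_def f_def m_def)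
  qed
  define W' where "W' = (\<Sum>s\<in>A0. ws s)"
  have W'0: "W' \<ge> 0" unfolding W'_def by (rule sum_nonneg) (use ws0 A0S in auto)
  have x'e: "(\<Sum>s\<in>A0. \<alpha>' (e i) s) = g i * W'" if i: "i \<in> {1..m}" for i
  proof -
    have "(\<Sum>s\<in>A0. \<alpha>' (e i) s) = (\<Sum>s\<in>A0. g i * ws s)"
      by (rule sum.cong) (use i idx_e eV wc A0S in \<open>auto simp: \<alpha>'_def\<close>)
    then show ?thesis by (simp add: W'_def sum_distrib_left)
  qed
  have cost': "total_cost V S \<sigma> w \<theta> \<alpha>' \<le> real k * min \<sigma>0 W' + min \<sigma>0 (f * W')"
  proof -
    have "total_cost V S \<sigma> w \<theta> \<alpha>' = (\<Sum>i=1..m. min \<sigma>0 (g i * W'))"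
      unfolding total_cost_def validator_cost_def attA reidx
      by (rule sum.cong) (use eV \<sigma>c x'e in auto)
    also have "\<dots> = (\<Sum>i=1..m. (if i \<le> k then min \<sigma>0 W' else if i = k+1 then min \<sigma>0 (f*W') else 0))"
      by (rule sum.cong) (use \<sigma>0pos in \<open>auto simp: g_def\<close>)
    also have "\<dots> = real (min m k) * min \<sigma>0 W' + (if k+1 \<le> m then min \<sigma>0 (f*W') else 0)"
      by (rule sumg)
    also have "\<dots> \<le> real k * min \<sigma>0 W' + min \<sigma>0 (f * W')"
    proof -
      have "min m k = k" using km by simp
      moreover have "min \<sigma>0 (f*W') \<ge> 0" using \<sigma>0pos W'0 f01 by simp
      ultimately show ?thesis by simp
    qed
    finally show ?thesis .
  qed
  define x where "x v = (\<Sum>s\<in>T. \<alpha> v s)" for v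
  have xb: "\<forall>v\<in>V. 0 \<le> x v \<and> x v \<le> W'"
  proof
    fix v assume v: "v \<in> V"
    have "0 \<le> x v" unfolding x_def by (rule sum_nonneg) (use att v TS in \<open>auto simp: is_attack_def\<close>)
    moreover have "x v \<le> (\<Sum>s\<in>T. ws s)" unfolding x_def
      by (rule sum_mono) (use att v TS wc in \<open>auto simp: is_attack_def\<close>)
    moreover have "(\<Sum>s\<in>T. ws s) \<le> W'" unfolding W'_def
      by (rule sum_mono2[OF finA0]) (use ws0 A0S in \<open>auto simp: A0_def\<close>)
    ultimately show "0 \<le> x v \<and> x v \<le> W'" by simp
  qed
  have tot: "(real k + f) * W' \<le> (\<Sum>v\<in>V. x v)"
  proof -
    have "(real k + f) * W' = (\<Sum>s\<in>A0. t * ws s)" by (simp add: kf W'_def sum_distrib_left)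
    also have "\<dots> = (\<Sum>s\<in>A0-T. t * ws s) + (\<Sum>s\<in>T. t * ws s)"
      using sum.subset_diff[of T A0] finA0 by (simp add: A0_def)
    also have "(\<Sum>s\<in>A0-T. t * ws s) \<le> 0"
    proof (rule sum_nonpos)
      fix s assume "s \<in> A0 - T"
      then have "s \<in> E" by (auto simp: A0_def)
      then show "t * ws s \<le> 0" using sumw \<theta>c by (auto simp: E_def t_def algebra_simps)
    qed
    also have "(\<Sum>s\<in>T. t * ws s) \<le> (\<Sum>s\<in>T. \<Sum>v\<in>V. \<alpha> v s)"
    proof (rule sum_mono)
      fix s assume s: "s \<in> T"
      then have sS: "s \<in> S" using TS by blast
      have "t * ws s = \<theta> s * (\<Sum>v\<in>V. w v s)" using sS sumw \<theta>c by (simp add: t_def)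
      then show "t * ws s \<le> (\<Sum>v\<in>V. \<alpha> v s)" using Tatt s by simp
    qed
    also have "\<dots> = (\<Sum>v\<in>V. x v)" unfolding x_def by (rule sum.swap)
    finally show ?thesis by simp
  qed
  have costa': "real k * min \<sigma>0 W' + min \<sigma>0 (f * W') \<le> total_cost V S \<sigma> w \<theta> \<alpha>"
  proof -
    have "real k * min \<sigma>0 W' + min \<sigma>0 (f * W') \<le> (\<Sum>v\<in>V. min \<sigma>0 (x v))"
      by (rule key[OF finV xb \<sigma>0pos W'0]) (use f01 tot in auto)
    also have "\<dots> = total_cost V S \<sigma> w \<theta> \<alpha>"
      unfolding total_cost_def validator_cost_def x_def T_def
      by (rule sum.cong) (use \<sigma>c in auto)
    finally show ?thesis .
  qed
  have prz: "prize V S w \<theta> \<pi> \<alpha> \<le> prize V S w \<theta> \<pi> \<alpha>'"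
    unfolding prize_def attA T_def[symmetric]
    by (rule sum_mono2[OF finA0]) (use \<pi>pos A0S in \<open>auto simp: A0_def intro: less_imp_le\<close>)
  have "beta_costly \<beta> V S \<sigma> w \<theta> \<pi> \<alpha>'"
    unfolding beta_costly_def using isatt attA Tne cost' costa' costa prz
    by (auto simp: A0_def)
  with cons show ?thesis by blast
qed

end
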